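(* Let $Y$ be a Banach space and $K\subset Y$ a closed convex normal cone. Let $\alpha:\mathbb{R}_+\to\mathbb{R}_+$ be nondecreasing with $\lim_{t\to0^+}\alpha(t)/t=0$, and let $k_0\in K$. Let $\Phi:(0,\infty)\to Y$ satisfy: (i) $\Phi(t)\in K$ for all $t>0$; (ii) $\Phi(t)-\Phi(t_1)+\frac{\alpha(t_1)}{t_1}k_0\in K$ whenever $0<t_1<t$; (iii) $\Phi(t)$ converges weakly to $0$ as $t\to0^+$. Then $\|\Phi(t)\|\to0$ as $t\to0^+$.
   Context: A cone $K$ in a normed space $Y$ is normal if there is a constant $c>0$ such that $0\le_K x\le_K y$ implies $\|x\|\le c\|y\|$, where $x\le_K y$ means $y-x\in K$. *)

theory Defs
  imports "HOL-Analysis.Analysis"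
begin

text \<open>Cone order: x \<le>_K y iff y - x \<in> K.  K is normal if there is c > 0 with
  0 \<le>_K x \<le>_K y implying norm x \<le> c * norm y.\<close>
definition normal_cone :: "'a::real_normed_vector set \<Rightarrow> bool" where
  "normal_cone K \<longleftrightarrow> (\<exists>c>0. \<forall>x y. x - 0 \<in> K \<longrightarrow> y - x \<in> K \<longrightarrow> norm x \<le> c * norm y)"

definition weak_tendsto :: "('b \<Rightarrow> 'a::real_normed_vector) \<Rightarrow> 'a \<Rightarrow> 'b filter \<Rightarrow> bool" where
  "weak_tendsto x l F \<longleftrightarrow> (\<forall>f::'a \<Rightarrow> real. bounded_linear f \<longrightarrow> ((\<lambda>t. f (x t)) \<longlongrightarrow> f l) F)"

end

theory Submission
  imports Defs
begin

definition lgraph :: "('a::real_vector \<Rightarrow> real) \<Rightarrow> ('a \<times> real) set \<Rightarrow> bool" where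
  "lgraph p G \<longleftrightarrow> (0,0) \<in> G \<and> (\<forall>x y y'. (x,y) \<in> G \<longrightarrow> (x,y') \<in> G \<longrightarrow> y = y')
     \<and> (\<forall>x y x' y'. (x,y) \<in> G \<longrightarrow> (x',y') \<in> G \<longrightarrow> (x+x', y+y') \<in> G)
     \<and> (\<forall>c x y. (x,y) \<in> G \<longrightarrow> (c *\<^sub>R x, c * y) \<in> G)
     \<and> (\<forall>x y. (x,y) \<in> G \<longrightarrow> y \<le> p x)"

lemma lgraphD:
  assumes "lgraph p G"
  shows "(0,0) \<in> G" "\<And>x y y'. (x,y) \<in> G \<Longrightarrow> (x,y') \<in> G \<Longrightarrow> y = y'"
    "\<And>x y x' y'. (x,y) \<in> G \<Longrightarrow> (x',y') \<in> G \<Longrightarrow> (x+x', y+y') \<in> G"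
    "\<And>c x y. (x,y) \<in> G \<Longrightarrow> (c *\<^sub>R x, c * y) \<in> G"
    "\<And>x y. (x,y) \<in> G \<Longrightarrow> y \<le> p x"
  using assms unfolding lgraph_def by blast+

lemma hb_extend:
  fixes p :: "'a::real_vector \<Rightarrow> real"
  assumes sub: "\<And>x y. p (x + y) \<le> p x + p y"
    and hom: "\<And>c x. c > 0 \<Longrightarrow> p (c *\<^sub>R x) = c * p x"
    and M: "lgraph p M" and z: "\<forall>y. (z,y) \<notin> M"
  shows "\<exists>M'. lgraph p M' \<and> M \<subseteq> M' \<and> M' \<noteq> M"
proof -
  from M have M0: "(0,0) \<in> M" and Mf: "\<And>x y y'. (x,y) \<in> M \<Longrightarrow> (x,y') \<in> M \<Longrightarrow> y = y'"
    and Ma: "\<And>x y x' y'. (x,y) \<in> M \<Longrightarrow> (x',y') \<in> M \<Longrightarrow> (x+x', y+y') \<in> M"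
    and Ms: "\<And>c x y. (x,y) \<in> M \<Longrightarrow> (c *\<^sub>R x, c * y) \<in> M"
    and Mp: "\<And>x y. (x,y) \<in> M \<Longrightarrow> y \<le> p x"
    unfolding lgraph_def by blast+
  define L where "L = {y - p (x - z) | x y. (x,y) \<in> M}"
  define c where "c = Sup L"
  have key: "y - p (x - z) \<le> p (x' + z) - y'" if "(x,y) \<in> M" "(x',y') \<in> M" for x y x' y'
  proof -
    have "y + y' \<le> p (x + x')" using Mp[OF Ma[OF that]] .
    also have "x + x' = (x - z) + (x' + z)" by simp
    hence "p (x + x') \<le> p (x - z) + p (x' + z)" using sub by metis
    finally show ?thesis by simp
  qed
  have Lne: "L \<noteq> {}" using M0 unfolding L_def by blast
  have Lbdd: "bdd_above L" unfolding L_def bdd_above_def using key M0 by blast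
  have cL: "y - p (x - z) \<le> c" if "(x,y) \<in> M" for x y
    unfolding c_def using that Lbdd by (intro cSup_upper) (auto simp: L_def)
  have cR: "c \<le> p (x' + z) - y'" if "(x',y') \<in> M" for x' y'
    unfolding c_def using Lne by (intro cSup_least) (auto simp: L_def intro: key that)
  define M' where "M' = {(x + t *\<^sub>R z, y + t * c) | x y t. (x,y) \<in> M}"
  have sub1: "M \<subseteq> M'"
  proof
    fix a assume "a \<in> M"
    then obtain x y where "a = (x,y)" "(x,y) \<in> M" by (cases a) auto
    thus "a \<in> M'" unfolding M'_def by (intro CollectI exI[of _ x] exI[of _ y] exI[of _ 0]) auto
  qed
  have zM': "(z, c) \<in> M'" unfolding M'_def using M0
    by (intro CollectI exI[of _ 0] exI[of _ 0] exI[of _ 1]) auto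
  have ne: "M' \<noteq> M" using zM' z by blast
  have bound: "y + t * c \<le> p (x + t *\<^sub>R z)" if xy: "(x,y) \<in> M" for x y t
  proof -
    consider "t = 0" | "t > 0" | "t < 0" by linarith
    thus ?thesis
    proof cases
      case 1 thus ?thesis using Mp[OF xy] by simp
    next
      case 2
      have "c \<le> p ((1/t) *\<^sub>R x + z) - (1/t) * y" using cR[OF Ms[OF xy]] .
      hence "t * c \<le> t * p ((1/t) *\<^sub>R x + z) - y" using 2
        by (simp add: field_simps) 
      also have "t * p ((1/t) *\<^sub>R x + z) = p (t *\<^sub>R ((1/t) *\<^sub>R x + z))" using hom[OF 2] by simp
      also have "t *\<^sub>R ((1/t) *\<^sub>R x + z) = x + t *\<^sub>R z" using 2 by (simp add: scaleR_add_right)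
      finally show ?thesis by simp
    next
      case 3
      define s where "s = - t"
      have s: "s > 0" using 3 s_def by simp
      have "(1/s) * y - p ((1/s) *\<^sub>R x - z) \<le> c" using cL[OF Ms[OF xy]] .
      hence "y - s * p ((1/s) *\<^sub>R x - z) \<le> s * c" using s
        by (simp add: field_simps)
      also have "s * p ((1/s) *\<^sub>R x - z) = p (s *\<^sub>R ((1/s) *\<^sub>R x - z))" using hom[OF s] by simp
      also have "s *\<^sub>R ((1/s) *\<^sub>R x - z) = x + t *\<^sub>R z" using s by (simp add: s_def scaleR_diff_right)
      finally show ?thesis by (simp add: s_def)
    qed
  qed
  have "lgraph p M'"
    unfolding lgraph_def
  proof (intro conjI allI impI)
    show "(0,0) \<in> M'" using sub1 M0 by blast
  next
    fix a b b'
    assume "(a, b) \<in> M'" "(a, b') \<in> M'"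
    then obtain x1 y1 t1 x2 y2 t2 where A: "(x1,y1) \<in> M" "(x2,y2) \<in> M"
      "a = x1 + t1 *\<^sub>R z" "b = y1 + t1 * c" "a = x2 + t2 *\<^sub>R z" "b' = y2 + t2 * c"
      unfolding M'_def by blast
    have "t1 = t2"
    proof (rule ccontr)
      assume ne: "t1 \<noteq> t2"
      have "(x2 + (-1) *\<^sub>R x1, y2 + (-1) * y1) \<in> M" using Ma[OF A(2) Ms[OF A(1)]] .
      from Ms[OF this, of "1/(t1-t2)"]
      have "((1/(t1-t2)) *\<^sub>R (x2 + (-1) *\<^sub>R x1), (1/(t1-t2)) * (y2 + (-1) * y1)) \<in> M" .
      moreover have "(1/(t1-t2)) *\<^sub>R (x2 + (-1) *\<^sub>R x1) = z"
      proof -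
        have "x2 - x1 = (t1 - t2) *\<^sub>R z" using A(3,5) by (simp add: algebra_simps)
        thus ?thesis using ne by simp
      qed
      ultimately show False using z by metis
    qed
    with A have "x1 = x2" by simp
    with A \<open>t1 = t2\<close> Mf show "b = b'" by metis
  next
    fix a b a' b'
    assume "(a, b) \<in> M'" "(a', b') \<in> M'"
    then obtain x1 y1 t1 x2 y2 t2 where A: "(x1,y1) \<in> M" "(x2,y2) \<in> M"
      "a = x1 + t1 *\<^sub>R z" "b = y1 + t1 * c" "a' = x2 + t2 *\<^sub>R z" "b' = y2 + t2 * c"
      unfolding M'_def by blast
    show "(a + a', b + b') \<in> M'" unfolding M'_def
      by (rule CollectI, rule exI[of _ "x1+x2"], rule exI[of _ "y1+y2"], rule exI[of _ "t1+t2"])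
         (use A Ma[OF A(1,2)] in \<open>auto simp: algebra_simps\<close>)
  next
    fix r a b
    assume "(a, b) \<in> M'"
    then obtain x1 y1 t1 where A: "(x1,y1) \<in> M" "a = x1 + t1 *\<^sub>R z" "b = y1 + t1 * c"
      unfolding M'_def by blast
    show "(r *\<^sub>R a, r * b) \<in> M'" unfolding M'_def
      by (rule CollectI, rule exI[of _ "r *\<^sub>R x1"], rule exI[of _ "r*y1"], rule exI[of _ "r*t1"])
         (use A Ms[OF A(1)] in \<open>auto simp: algebra_simps\<close>)
  next
    fix a b
    assume "(a, b) \<in> M'"
    then obtain x1 y1 t1 where A: "(x1,y1) \<in> M" "a = x1 + t1 *\<^sub>R z" "b = y1 + t1 * c"
      unfolding M'_def by blast
    show "b \<le> p a" using bound[OF A(1)] A by simp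
  qed
  thus ?thesis using sub1 ne by blast
qed

lemma hahn_banach_sublinear:
  fixes p :: "'a::real_vector \<Rightarrow> real"
  assumes sub: "\<And>x y. p (x + y) \<le> p x + p y"
    and hom: "\<And>c x. c > 0 \<Longrightarrow> p (c *\<^sub>R x) = c * p x"
  shows "\<exists>f. linear f \<and> (\<forall>x. f x \<le> p x)"
proof -
  have p0: "p 0 = 0" using hom[of 2 0] by simp
  define A where "A = {G. lgraph p G}"
  have "\<exists>M\<in>A. \<forall>X\<in>A. M \<subseteq> X \<longrightarrow> X = M"
  proof (rule Zorn_Lemma2, intro ballI)
    fix C assume C: "C \<in> chains A"
    show "\<exists>U\<in>A. \<forall>X\<in>C. X \<subseteq> U"
    proof (cases "C = {}")
      case True
      have "lgraph p {(0,0)}" unfolding lgraph_def using p0 by auto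
      thus ?thesis using True A_def by blast
    next
      case False
      have CA: "\<And>G. G \<in> C \<Longrightarrow> lgraph p G" using chainsD2[OF C] A_def by blast
      have ch: "\<And>G H. G \<in> C \<Longrightarrow> H \<in> C \<Longrightarrow> G \<subseteq> H \<or> H \<subseteq> G" using chainsD[OF C] by blast
      have "lgraph p (\<Union>C)"
        unfolding lgraph_def
      proof (intro conjI allI impI)
        obtain G where "G \<in> C" using False by blast
        thus "(0,0) \<in> \<Union>C" using lgraphD(1)[OF CA] by blast
      next
        fix x y y' assume "(x,y) \<in> \<Union>C" "(x,y') \<in> \<Union>C"
        then obtain G H where "G \<in> C" "H \<in> C" "(x,y) \<in> G" "(x,y') \<in> H" by blast
        hence "(x,y) \<in> G \<and> (x,y') \<in> G \<or> (x,y) \<in> H \<and> (x,y') \<in> H" using ch by blast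
        thus "y = y'" using lgraphD(2)[OF CA[OF \<open>G \<in> C\<close>]] lgraphD(2)[OF CA[OF \<open>H \<in> C\<close>]] by blast
      next
        fix x y x' y' assume "(x,y) \<in> \<Union>C" "(x',y') \<in> \<Union>C"
        then obtain G H where GH: "G \<in> C" "H \<in> C" "(x,y) \<in> G" "(x',y') \<in> H" by blast
        show "(x+x', y+y') \<in> \<Union>C"
        proof (cases "G \<subseteq> H")
          case True thus ?thesis using GH lgraphD(3)[OF CA[of H]] by blast
        next
          case False
          hence "H \<subseteq> G" using ch GH by blast
          thus ?thesis using GH lgraphD(3)[OF CA[of G]] by blast
        qed
      next
        fix r x y assume "(x,y) \<in> \<Union>C"
        then obtain G where "G \<in> C" "(x,y) \<in> G" by blast
        thus "(r *\<^sub>R x, r * y) \<in> \<Union>C" using lgraphD(4)[OF CA] by blast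
      next
        fix x y assume "(x,y) \<in> \<Union>C"
        then obtain G where "G \<in> C" "(x,y) \<in> G" by blast
        thus "y \<le> p x" using lgraphD(5)[OF CA] by blast
      qed
      thus ?thesis unfolding A_def by blast
    qed
  qed
  then obtain M where M: "lgraph p M" and max: "\<And>X. lgraph p X \<Longrightarrow> M \<subseteq> X \<Longrightarrow> X = M"
    unfolding A_def by blast
  have tot: "\<exists>y. (x,y) \<in> M" for x
  proof (rule ccontr)
    assume "\<nexists>y. (x, y) \<in> M"
    hence "\<forall>y. (x,y) \<notin> M" by blast
    from hb_extend[OF sub hom M this] max show False by blast
  qed
  define f where "f x = (THE y. (x,y) \<in> M)" for x
  have Mf: "\<And>x y y'. (x,y) \<in> M \<Longrightarrow> (x,y') \<in> M \<Longrightarrow> y = y'"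
    and Ma: "\<And>x y x' y'. (x,y) \<in> M \<Longrightarrow> (x',y') \<in> M \<Longrightarrow> (x+x', y+y') \<in> M"
    and Ms: "\<And>c x y. (x,y) \<in> M \<Longrightarrow> (c *\<^sub>R x, c * y) \<in> M"
    and Mp: "\<And>x y. (x,y) \<in> M \<Longrightarrow> y \<le> p x"
    using lgraphD[OF M] by blast+
  have fM: "(x, f x) \<in> M" for x
  proof -
    obtain y where "(x,y) \<in> M" using tot by blast
    hence "f x = y" unfolding f_def using Mf by blast
    thus ?thesis using \<open>(x,y) \<in> M\<close> by simp
  qed
  have fe: "(x,y) \<in> M \<Longrightarrow> f x = y" for x y using fM Mf by blast
  have "linear f"
  proof (rule linearI)
    fix a b show "f (a + b) = f a + f b" using fe[OF Ma[OF fM fM]] .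
  next
    fix r a show "f (r *\<^sub>R a) = r *\<^sub>R f a" using fe[OF Ms[OF fM]] by simp
  qed
  moreover have "\<forall>x. f x \<le> p x" using Mp fM by blast
  ultimately show ?thesis by blast
qed

lemma separation_ball:
  fixes D :: "'a::real_normed_vector set"
  assumes cvx: "convex D" and Dne: "D \<noteq> {}" and eta: "\<eta> > 0" and far: "\<forall>d\<in>D. \<eta> \<le> norm d"
  shows "\<exists>f. bounded_linear f \<and> (\<forall>d\<in>D. \<eta> \<le> f d)"
proof -
  define S where "S x = {norm (x + s *\<^sub>R d) - s * \<eta> | s d. s \<ge> 0 \<and> d \<in> D}" for x
  define p where "p x = Inf (S x)" for x
  obtain d0 where d0: "d0 \<in> D" using Dne by blast
  have Sne: "S x \<noteq> {}" for x unfolding S_def using d0 by blast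
  have lowS: "- norm x \<le> norm (x + s *\<^sub>R d) - s * \<eta>" if "s \<ge> 0" "d \<in> D" for x s d
  proof -
    have "s * \<eta> \<le> s * norm d" using far that by (simp add: mult_left_mono)
    also have "s * norm d = norm (s *\<^sub>R d)" using that by simp
    also have "norm (s *\<^sub>R d) \<le> norm (x + s *\<^sub>R d) + norm x" by (metis add_diff_cancel_left' norm_triangle_ineq4 add.commute)
    finally show ?thesis by simp
  qed
  have Sbdd: "bdd_below (S x)" for x unfolding S_def bdd_below_def using lowS by blast
  have pl: "p x \<le> norm (x + s *\<^sub>R d) - s * \<eta>" if "s \<ge> 0" "d \<in> D" for x s d
    unfolding p_def using that Sbdd by (intro cInf_lower) (auto simp: S_def)
  have pg: "v \<le> p x" if "\<And>s d. s \<ge> 0 \<Longrightarrow> d \<in> D \<Longrightarrow> v \<le> norm (x + s *\<^sub>R d) - s * \<eta>" for v x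
    unfolding p_def using Sne that by (intro cInf_greatest) (auto simp: S_def)
  have pnorm: "p x \<le> norm x" for x using pl[of 0 d0 x] d0 by simp
  have hom1: "p (c *\<^sub>R x) \<le> c * p x" if c: "c > 0" for c x
  proof -
    have "p (c *\<^sub>R x) / c \<le> p x"
    proof (rule pg)
      fix s :: real and d assume "s \<ge> 0" "d \<in> D"
      have "p (c *\<^sub>R x) \<le> norm (c *\<^sub>R x + (c * s) *\<^sub>R d) - (c * s) * \<eta>"
        using pl[of "c * s" d] \<open>s \<ge> 0\<close> \<open>d \<in> D\<close> c by simp
      also have "c *\<^sub>R x + (c * s) *\<^sub>R d = c *\<^sub>R (x + s *\<^sub>R d)" by (simp add: scaleR_add_right)
      also have "norm (c *\<^sub>R (x + s *\<^sub>R d)) - (c * s) * \<eta> = c * (norm (x + s *\<^sub>R d) - s * \<eta>)"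
        using c by (simp add: abs_of_pos right_diff_distrib mult.assoc)
      finally show "p (c *\<^sub>R x) / c \<le> norm (x + s *\<^sub>R d) - s * \<eta>" using c by (simp add: field_simps)
    qed
    thus ?thesis using c by (simp add: field_simps)
  qed
  have hom: "p (c *\<^sub>R x) = c * p x" if c: "c > 0" for c x
  proof -
    have "p x = p ((1/c) *\<^sub>R (c *\<^sub>R x))" using c by simp
    also have "\<dots> \<le> (1/c) * p (c *\<^sub>R x)" using hom1[of "1/c" "c *\<^sub>R x"] c by simp
    finally have "c * p x \<le> p (c *\<^sub>R x)" using c by (simp add: field_simps)
    thus ?thesis using hom1[OF c, of x] by linarith
  qed
  have sub: "p (x + y) \<le> p x + p y" for x y
  proof -
    have main: "p (x + y) \<le> (norm (x + s1 *\<^sub>R d1) - s1 * \<eta>) + (norm (y + s2 *\<^sub>R d2) - s2 * \<eta>)"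
      if "s1 \<ge> 0" "d1 \<in> D" "s2 \<ge> 0" "d2 \<in> D" for s1 d1 s2 d2
    proof (cases "s1 + s2 = 0")
      case True
      hence "s1 = 0" "s2 = 0" using that by auto
      thus ?thesis using pl[of 0 d1 "x+y"] that norm_triangle_ineq[of x y] by simp
    next
      case False
      hence s: "s1 + s2 > 0" using that by auto
      define d where "d = (s1/(s1+s2)) *\<^sub>R d1 + (s2/(s1+s2)) *\<^sub>R d2"
      have dD: "d \<in> D" unfolding d_def
        using convexD[OF cvx that(2) that(4), of "s1/(s1+s2)" "s2/(s1+s2)"] that s
        by (simp add: add_divide_distrib[symmetric])
      have sd: "(s1 + s2) *\<^sub>R d = s1 *\<^sub>R d1 + s2 *\<^sub>R d2" unfolding d_def using s
        by (simp add: scaleR_add_right)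
      have "p (x + y) \<le> norm (x + y + (s1 + s2) *\<^sub>R d) - (s1 + s2) * \<eta>"
        using pl[of "s1+s2" d] s dD by simp
      also have "x + y + (s1 + s2) *\<^sub>R d = (x + s1 *\<^sub>R d1) + (y + s2 *\<^sub>R d2)" using sd by (simp add: algebra_simps)
      finally show ?thesis using norm_triangle_ineq[of "x + s1 *\<^sub>R d1" "y + s2 *\<^sub>R d2"] by (simp add: algebra_simps)
    qed
    have "p (x + y) - p y \<le> p x"
    proof (rule pg)
      fix s1 :: real and d1 assume h1: "s1 \<ge> 0" "d1 \<in> D"
      have "p (x + y) - (norm (x + s1 *\<^sub>R d1) - s1 * \<eta>) \<le> p y"
        by (rule pg) (use main h1 in \<open>fastforce\<close>)
      thus "p (x + y) - p y \<le> norm (x + s1 *\<^sub>R d1) - s1 * \<eta>" by simp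
    qed
    thus ?thesis by simp
  qed
  obtain g where g: "linear g" "\<forall>x. g x \<le> p x" using hahn_banach_sublinear[of p] sub hom by blast
  have gneg: "g (- x) = - g x" for x using linear_neg[OF g(1)] .
  have gb: "norm (g x) \<le> norm x * 1" for x
  proof -
    have "g x \<le> norm x" using g(2) pnorm order_trans by blast
    moreover have "- g x \<le> norm x" using g(2)[rule_format, of "-x"] pnorm[of "-x"] gneg by simp
    ultimately show ?thesis by simp
  qed
  have "bounded_linear g"
    by (rule bounded_linear_intro[of g 1]) (use linear_add[OF g(1)] linear_scale[OF g(1)] gb in auto)
  moreover have "\<eta> \<le> g d" if "d \<in> D" for d
  proof -
    have "g (- d) \<le> - \<eta>" using g(2)[rule_format, of "-d"] pl[of 1 d "-d"] that by simp
    thus ?thesis using gneg by simp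
  qed
  ultimately show ?thesis by blast
qed

theorem lemma4p1:
  fixes K :: "'a::banach set" and \<alpha> :: "real \<Rightarrow> real" and k0 :: 'a and \<Phi> :: "real \<Rightarrow> 'a"
  assumes "closed K" and "convex K" and "cone K" and "normal_cone K"
    and "\<forall>t\<ge>0. \<alpha> t \<ge> 0" and "mono_on {0..} \<alpha>"
    and "((\<lambda>t. \<alpha> t / t) \<longlongrightarrow> 0) (at_right 0)"
    and "k0 \<in> K"
    and "\<forall>t>0. \<Phi> t \<in> K"
    and "\<forall>t1 t. 0 < t1 \<and> t1 < t \<longrightarrow> \<Phi> t - \<Phi> t1 + (\<alpha> t1 / t1) *\<^sub>R k0 \<in> K"
    and "weak_tendsto \<Phi> 0 (at_right 0)"
  shows "((\<lambda>t. norm (\<Phi> t)) \<longlongrightarrow> 0) (at_right 0)"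
proof -
  note cvxK = assms(2) and PK = assms(9) and PK2 = assms(10)
  obtain c where c: "c > 0" and nrm: "\<And>x y. x - 0 \<in> K \<Longrightarrow> y - x \<in> K \<Longrightarrow> norm x \<le> c * norm y"
    using assms(4) unfolding normal_cone_def by blast
  define D where "D = convex hull (\<Phi> ` {0<..})"
  have mazur: "\<exists>x\<in>D. norm x < \<eta>" if eta: "\<eta> > 0" for \<eta>
  proof (rule ccontr)
    assume "\<not> (\<exists>x\<in>D. norm x < \<eta>)"
    hence far: "\<forall>d\<in>D. \<eta> \<le> norm d" by (auto simp: not_less)
    have "D \<noteq> {}" unfolding D_def by auto
    then obtain f where f: "bounded_linear f" "\<forall>d\<in>D. \<eta> \<le> f d"
      using separation_ball[of D \<eta>] far eta unfolding D_def by auto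
    have ge: "\<eta> \<le> f (\<Phi> t)" if "t > 0" for t
      using f(2) that unfolding D_def by (meson greaterThan_iff hull_inc image_eqI)
    have "((\<lambda>t. f (\<Phi> t)) \<longlongrightarrow> f 0) (at_right 0)"
      using assms(11) f(1) unfolding weak_tendsto_def by blast
    hence "((\<lambda>t. f (\<Phi> t)) \<longlongrightarrow> 0) (at_right 0)" using linear_0[OF bounded_linear.linear[OF f(1)]] by simp
    hence "eventually (\<lambda>t. f (\<Phi> t) < \<eta>) (at_right (0::real))" using eta by (rule order_tendstoD)
    moreover have "eventually (\<lambda>t. t > 0) (at_right (0::real))" by (rule eventually_at_right_less)
    ultimately have "eventually (\<lambda>t::real. False) (at_right 0)"
      by eventually_elim (use ge in force)
    thus False by simp
  qed
  show ?thesis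
  proof (rule tendstoI)
    fix e :: real assume e: "e > 0"
    define \<eta> where "\<eta> = e / (2 * c)"
    have eta: "\<eta> > 0" using e c by (simp add: \<eta>_def)
    obtain x where xD: "x \<in> D" and xn: "norm x < \<eta>" using mazur[OF eta] by blast
    then obtain S u where S: "finite S" "S \<subseteq> \<Phi> ` {0<..}" "\<forall>v\<in>S. 0 \<le> u v" "sum u S = 1"
      "(\<Sum>v\<in>S. u v *\<^sub>R v) = x"
      unfolding D_def convex_hull_explicit by blast
    have "\<forall>v\<in>S. \<exists>t. t > 0 \<and> v = \<Phi> t" using S(2) by auto
    then obtain \<tau> where tau: "\<And>v. v \<in> S \<Longrightarrow> \<tau> v > 0 \<and> v = \<Phi> (\<tau> v)" by metis
    have Sne: "S \<noteq> {}" using S(4) by auto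
    define m where "m = Min (\<tau> ` S)"
    have m: "m > 0" unfolding m_def using S(1) Sne tau by auto
    have mle: "m \<le> \<tau> v" if "v \<in> S" for v unfolding m_def using S(1) that by simp
    have "((\<lambda>s. (\<alpha> s / s) *\<^sub>R k0) \<longlongrightarrow> 0 *\<^sub>R k0) (at_right 0)"
      using assms(7) by (intro tendsto_scaleR) auto
    hence "((\<lambda>s. norm ((\<alpha> s / s) *\<^sub>R k0)) \<longlongrightarrow> 0) (at_right 0)" using tendsto_norm_zero by force
    hence ev1: "eventually (\<lambda>s. norm ((\<alpha> s / s) *\<^sub>R k0) < \<eta>) (at_right (0::real))"
      using eta by (rule order_tendstoD)
    have ev2: "eventually (\<lambda>s. s \<in> {0<..<m}) (at_right (0::real))"
      using m by (intro eventually_at_rightI) auto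
    show "eventually (\<lambda>s. dist (norm (\<Phi> s)) 0 < e) (at_right 0)"
      using ev1 ev2
    proof eventually_elim
      case (elim s)
      define w where "w = (\<alpha> s / s) *\<^sub>R k0"
      have s: "0 < s" "s < m" using elim by auto
      have inK: "(\<Sum>v\<in>S. u v *\<^sub>R (v - \<Phi> s + w)) \<in> K"
      proof (rule convex_sum[OF S(1) cvxK S(4)])
        show "\<And>i. i \<in> S \<Longrightarrow> 0 \<le> u i" using S(3) by blast
      next
        fix v assume v: "v \<in> S"
        have "s < \<tau> v" using mle[OF v] s by linarith
        thus "v - \<Phi> s + w \<in> K" using PK2 s tau[OF v] unfolding w_def by metis
      qed
      have "(\<Sum>v\<in>S. u v *\<^sub>R (v - \<Phi> s + w)) = (\<Sum>v\<in>S. u v *\<^sub>R v) + (\<Sum>v\<in>S. u v *\<^sub>R w) - (\<Sum>v\<in>S. u v *\<^sub>R \<Phi> s)"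
        by (simp add: sum.distrib sum_subtractf scaleR_diff_right scaleR_add_right)
      also have "\<dots> = (\<Sum>v\<in>S. u v *\<^sub>R v) + (\<Sum>v\<in>S. u v) *\<^sub>R w - (\<Sum>v\<in>S. u v) *\<^sub>R \<Phi> s"
        by (simp add: scaleR_sum_left)
      also have "\<dots> = (x + w) - \<Phi> s" using S(4,5) by simp
      finally have "(x + w) - \<Phi> s \<in> K" using inK by simp
      moreover have "\<Phi> s - 0 \<in> K" using PK s by simp
      ultimately have "norm (\<Phi> s) \<le> c * norm (x + w)" using nrm by blast
      also have "\<dots> \<le> c * (norm x + norm w)" using c norm_triangle_ineq by (simp add: mult_left_mono)
      also have "\<dots> < c * (\<eta> + \<eta>)" using c xn elim unfolding w_def by (intro mult_strict_left_mono) auto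
      also have "\<dots> = e" using c by (simp add: \<eta>_def field_simps)
      finally show ?case by simp
    qed
  qed
qed

end
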